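(* Let $f:\mathcal X\to\mathbb R$ be Lipschitz continuous with Lipschitz constant $|f|_1<\infty$. Then for every $\varepsilon>0$ the maximum $M_f=\max_{x\in\mathcal X}f(x)$ satisfies \[|M_f-\varepsilon L_{f/\varepsilon}|\le\varepsilon d\log(1+3d^{-1/2}|f|_1/\varepsilon),\] and the right-hand side tends to $0$ as $\varepsilon\searrow0$. Moreover, for any bounded measurable $f:\mathcal X\to\mathbb R$, any $\varepsilon>0$ and any $\delta\in(0,1]$, \[P_{f/\varepsilon}(\{x\in\mathcal X:f(x)<\varepsilon L_{f/\varepsilon}-\varepsilon\log(1/\delta)\})\le\delta.\]
   Context: $\mathcal X=[0,1]^d$ with Lebesgue measure. For bounded measurable $h$: $Z_h=\int_{\mathcal X}e^h dx$, $L_h=\log Z_h$, $P_h$ the distribution with density $e^h/Z_h$. $|f|_1$ denotes the minimal Lipschitz constant with respect to the Euclidean norm. *)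

theory Defs
  imports "HOL-Analysis.Analysis"
begin

text \<open>The unit cube X = [0,1]^d, with d = CARD('n).\<close>
definition unit_cube :: "(real ^ 'n) set" where
  "unit_cube = cbox 0 1"

definition Zpart :: "(real ^ 'n \<Rightarrow> real) \<Rightarrow> real" where
  "Zpart h = (\<integral>x \<in> unit_cube. exp (h x) \<partial>lebesgue)"

definition Lpart :: "(real ^ 'n \<Rightarrow> real) \<Rightarrow> real" where
  "Lpart h = ln (Zpart h)"

definition Pdist :: "(real ^ 'n \<Rightarrow> real) \<Rightarrow> (real ^ 'n) measure" where
  "Pdist h = density (lebesgue_on unit_cube) (\<lambda>x. ennreal (exp (h x) / Zpart h))"

definition lipconst :: "(real ^ 'n \<Rightarrow> real) \<Rightarrow> real" where
  "lipconst f = Inf {C. C-lipschitz_on unit_cube f}"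

end

theory Submission
  imports Defs "HOL-Real_Asymp.Real_Asymp"
begin


lemma cube_lmeas: "unit_cube \<in> lmeasurable"
  unfolding unit_cube_def by simp

lemma Zpart_eq: "Zpart h = integral\<^sup>L (lebesgue_on unit_cube) (\<lambda>x. exp (h x))"
  unfolding Zpart_def set_lebesgue_integral_def
  by (subst integral_restrict_space) (use cube_lmeas in auto)

lemma exp_integrable:
  fixes h :: "real^'n \<Rightarrow> real"
  assumes "h \<in> borel_measurable (lebesgue_on unit_cube)" "\<And>x. x \<in> unit_cube \<Longrightarrow> h x \<le> B"
  shows "integrable (lebesgue_on unit_cube) (\<lambda>x. exp (h x))"
proof -
  interpret finite_measure "lebesgue_on (unit_cube :: (real^'n) set)"
    using finite_measure_lebesgue_on[OF cube_lmeas] .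
  show ?thesis
    by (rule integrable_const_bound[where B="exp B"]) (use assms in auto)
qed


lemma exp_le_13: assumes "0 \<le> b" "b \<le> (1::real)" shows "exp b \<le> 1 + 3*b"
proof -
  have "norm (exp (b/2)) \<le> 1 + 2 * norm (b/2)"
    by (rule exp_bound_lemma) (use assms in auto)
  hence e: "exp (b/2) \<le> 1 + b" using assms by simp
  have "exp b = exp (b/2) * exp (b/2)" by (simp flip: exp_add)
  also have "\<dots> \<le> (1+b)*(1+b)" using e assms by (intro mult_mono) auto
  also have "\<dots> \<le> 1 + 3*b"
  proof -
    have "b * b \<le> b * 1" using assms by (intro mult_left_mono) auto
    thus ?thesis by (simp add: algebra_simps)
  qed
  finally show ?thesis .
qed

lemma key_ineq:
  fixes b :: real assumes "0 \<le> b"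
  defines "s \<equiv> (if b \<le> 1 then 1 else 1/b)"
  shows "0 < s" "s \<le> 1" "- ln s + b * s \<le> ln (1 + 3*b)"
proof -
  show "0 < s" "s \<le> 1" using assms by auto
  show "- ln s + b * s \<le> ln (1 + 3*b)"
  proof (cases "b \<le> 1")
    case True
    then show ?thesis using exp_le_13[OF assms(1) True] assms
      by (simp add: s_def ln_ge_iff)
  next
    case False
    hence "s = 1/b" by (simp add: s_def)
    hence "- ln s + b * s = ln b + 1" using False by (simp add: ln_div)
    also have "\<dots> = ln (b * exp 1)" using False by (simp add: ln_mult)
    also have "\<dots> \<le> ln (1 + 3*b)" using False exp_le
      by (subst ln_le_cancel_iff) (auto intro: mult_left_mono order.trans[of _ "b*3"])
    finally show ?thesis .
  qed
qed



lemma lipconst_lip: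
  fixes f :: "real^'n \<Rightarrow> real"
  assumes "\<exists>C. C-lipschitz_on unit_cube f"
  shows "(lipconst f)-lipschitz_on unit_cube f"
proof -
  let ?S = "{C. C-lipschitz_on unit_cube f}"
  have ne: "?S \<noteq> {}" using assms by auto
  have bdd: "bdd_below ?S" by (rule bdd_belowI[of _ 0]) (auto dest: lipschitz_on_nonneg)
  have nn: "0 \<le> lipconst f" unfolding lipconst_def
    by (rule cInf_greatest[OF ne]) (auto dest: lipschitz_on_nonneg)
  show ?thesis
  proof (rule lipschitz_onI[OF _ nn])
    fix x y :: "real^'n" assume xy: "x \<in> unit_cube" "y \<in> unit_cube"
    show "dist (f x) (f y) \<le> lipconst f * dist x y"
    proof (cases "dist x y = 0")
      case True
      then show ?thesis by simp
    next
      case False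
      hence pos: "dist x y > 0" by simp
      have "dist (f x) (f y) / dist x y \<le> lipconst f" unfolding lipconst_def
        apply (rule cInf_greatest[OF ne])
        using xy pos by (auto dest!: lipschitz_onD[of _ _ f x y] simp: divide_le_eq)
      thus ?thesis using pos by (simp add: divide_le_eq mult.commute)
    qed
  qed
qed

lemma measure_subcube:
  fixes l :: "real^'n" assumes "0 \<le> s"
  shows "measure lebesgue (cbox l (l + s *\<^sub>R 1)) = s ^ CARD('n)"
proof -
  have "l \<in> cbox l (l + s *\<^sub>R 1)" using assms by (simp add: mem_box_cart)
  hence "cbox l (l + s *\<^sub>R 1) \<noteq> {}" by auto
  thus ?thesis by (simp add: content_cbox_cart)
qed

lemma subcube_dist:
  fixes l x y :: "real^'n" assumes "x \<in> cbox l (l + s *\<^sub>R 1)" "y \<in> cbox l (l + s *\<^sub>R 1)"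
  shows "dist x y \<le> s * sqrt (real CARD('n))"
proof -
  have s: "0 \<le> s" using assms by (auto simp: mem_box_cart)
  have c: "\<bar>x$i - y$i\<bar> \<le> s" for i using assms by (auto simp: mem_box_cart abs_le_iff) (smt (verit))+
  have "dist x y = sqrt (\<Sum>i\<in>UNIV. (x$i - y$i)^2)"
    by (simp add: dist_norm norm_vec_def L2_set_def)
  also have "\<dots> \<le> sqrt (\<Sum>i\<in>(UNIV::'n set). s^2)"
    using c s by (intro real_sqrt_le_mono sum_mono) (metis abs_ge_zero power2_abs power_mono)
  also have "\<dots> = s * sqrt (real CARD('n))" using s by (simp add: real_sqrt_mult)
  finally show ?thesis .
qed

lemma subcube_exists:
  fixes x :: "real^'n" assumes "x \<in> unit_cube" "0 < s" "s \<le> 1"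
  obtains l where "x \<in> cbox l (l + s *\<^sub>R 1)" "cbox l (l + s *\<^sub>R 1) \<subseteq> unit_cube"
proof -
  define l where "l = (\<chi> i. max 0 (x$i - s))"
  have x: "0 \<le> x$i" "x$i \<le> 1" for i using assms by (auto simp: unit_cube_def mem_box_cart)
  show ?thesis
  proof
    show "x \<in> cbox l (l + s *\<^sub>R 1)" using x assms by (auto simp: l_def mem_box_cart)
    have m: "max 0 (x$i - s) + s \<le> 1" for i using x[of i] assms by (simp add: max_def)
    show "cbox l (l + s *\<^sub>R 1) \<subseteq> unit_cube" using x assms
      using m by (auto simp: l_def mem_box_cart unit_cube_def) (meson order_trans)
  qed
qed


lemma cube_meas1: "measure (lebesgue_on unit_cube) (unit_cube :: (real^'n) set) = 1"
proof -
  have "measure lebesgue (cbox 0 (0 + 1 *\<^sub>R 1) :: (real^'n) set) = 1"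
    using measure_subcube[of 1 0] by simp
  thus ?thesis using cube_lmeas by (simp add: measure_restrict_space unit_cube_def)
qed

lemma space_cube: "space (lebesgue_on unit_cube) = unit_cube"
  using cube_lmeas by simp


lemma part1:
  fixes f :: "real ^ 'n \<Rightarrow> real" and \<epsilon> :: real
  assumes lipex: "\<exists>C. C-lipschitz_on unit_cube f" and e: "\<epsilon> > 0"
  shows "\<bar>Sup (f ` unit_cube) - \<epsilon> * Lpart (\<lambda>x. f x / \<epsilon>)\<bar>
            \<le> \<epsilon> * real CARD('n) *
               ln (1 + 3 * real CARD('n) powr (-1/2) * lipconst f / \<epsilon>)"
proof -
  define K where "K = lipconst f"
  have lip: "K-lipschitz_on unit_cube f" unfolding K_def by (rule lipconst_lip[OF lipex])
  have K0: "0 \<le> K" using lip by (rule lipschitz_on_nonneg)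
  have cont: "continuous_on unit_cube f" using lip by (rule lipschitz_on_continuous_on)
  have cpt: "compact (unit_cube :: (real^'n) set)" unfolding unit_cube_def by simp
  have ne: "(unit_cube :: (real^'n) set) \<noteq> {}" unfolding unit_cube_def
  proof -
    have "(0::real^'n) \<in> cbox 0 1" by (simp add: mem_box_cart)
    thus "cbox (0::real^'n) 1 \<noteq> {}" by blast
  qed
  obtain xs where xs: "xs \<in> unit_cube" "\<And>y. y \<in> unit_cube \<Longrightarrow> f y \<le> f xs"
    using continuous_attains_sup[OF cpt ne cont] by blast
  define M where "M = f xs"
  have supM: "Sup (f ` unit_cube) = M" unfolding M_def
    by (rule cSup_eq_maximum) (use xs in auto)
  have meas: "(\<lambda>x. f x / \<epsilon>) \<in> borel_measurable (lebesgue_on unit_cube)"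
  proof -
    have "f \<in> borel_measurable (lebesgue_on unit_cube)"
      using continuous_imp_measurable_on_sets_lebesgue[OF cont] cube_lmeas by auto
    thus ?thesis by measurable
  qed
  have int: "integrable (lebesgue_on unit_cube) (\<lambda>x. exp (f x / \<epsilon>))"
    by (rule exp_integrable[OF meas, where B="M/\<epsilon>"]) (use xs e in \<open>auto simp: M_def divide_right_mono\<close>)
  define Z where "Z = Zpart (\<lambda>x. f x / \<epsilon>)"
  have Zeq: "Z = integral\<^sup>L (lebesgue_on unit_cube) (\<lambda>x. exp (f x / \<epsilon>))"
    unfolding Z_def by (rule Zpart_eq)
  have Zup: "Z \<le> exp (M / \<epsilon>)"
  proof -
    have "Z \<le> integral\<^sup>L (lebesgue_on (unit_cube :: (real^'n) set)) (\<lambda>x. exp (M / \<epsilon>))"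
      unfolding Zeq
    proof (rule integral_mono[OF int])
      interpret finite_measure "lebesgue_on (unit_cube :: (real^'n) set)"
        using finite_measure_lebesgue_on[OF cube_lmeas] .
      show "integrable (lebesgue_on (unit_cube :: (real^'n) set)) (\<lambda>x. exp (M / \<epsilon>))" by simp
      fix x :: "real^'n" assume "x \<in> space (lebesgue_on unit_cube)"
      then show "exp (f x / \<epsilon>) \<le> exp (M / \<epsilon>)"
        using xs e space_cube by (auto simp: M_def divide_right_mono)
    qed
    also have "\<dots> = exp (M / \<epsilon>)" using cube_meas1 space_cube by simp
    finally show ?thesis .
  qed
  define d where "d = real CARD('n)"
  have d0: "d > 0" unfolding d_def by simp
  define b where "b = K / (\<epsilon> * sqrt d)"
  have b0: "0 \<le> b" unfolding b_def using K0 e d0 by simp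
  define s where "s = (if b \<le> 1 then 1 else 1/b)"
  have s: "0 < s" "s \<le> 1" "- ln s + b * s \<le> ln (1 + 3*b)"
    using key_ineq[OF b0] unfolding s_def by auto
  obtain l where Q: "xs \<in> cbox l (l + s *\<^sub>R 1)" "cbox l (l + s *\<^sub>R 1) \<subseteq> unit_cube"
    using subcube_exists[OF xs(1) s(1,2)] by blast
  define Q where "Q = cbox l (l + s *\<^sub>R 1)"
  define c where "c = (M - K * (s * sqrt d)) / \<epsilon>"
  have fQ: "c \<le> f x / \<epsilon>" if x: "x \<in> Q" for x
  proof -
    have "f xs - f x \<le> dist (f x) (f xs)" by (simp add: dist_real_def)
    also have "\<dots> \<le> K * dist x xs" using lip x Q by (auto simp: Q_def intro: lipschitz_onD)
    also have "\<dots> \<le> K * (s * sqrt d)" using subcube_dist[of x l s xs] x Q K0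
      by (auto simp: Q_def d_def intro: mult_left_mono)
    finally show ?thesis using e by (simp add: c_def M_def divide_right_mono)
  qed
  have Zlow: "exp c * s ^ CARD('n) \<le> Z"
  proof -
    have Qs: "Q \<in> sets lebesgue" unfolding Q_def by simp
    have mQ: "measure (lebesgue_on unit_cube) Q = s ^ CARD('n)"
    proof -
      have "measure (lebesgue_on unit_cube) Q = measure lebesgue Q"
        by (rule measure_restrict_space) (use Q cube_lmeas in \<open>auto simp: Q_def\<close>)
      thus ?thesis using measure_subcube[of s l] s by (simp add: Q_def)
    qed
    have "exp c * s ^ CARD('n) = integral\<^sup>L (lebesgue_on unit_cube) (\<lambda>x. indicator Q x * exp c)"
      using mQ Q space_cube by (simp add: Q_def Int_absorb2 mult.commute)
    also have "\<dots> \<le> Z" unfolding Zeq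
    proof (rule integral_mono[OF _ int])
      interpret finite_measure "lebesgue_on (unit_cube :: (real^'n) set)"
        using finite_measure_lebesgue_on[OF cube_lmeas] .
      show "integrable (lebesgue_on unit_cube) (\<lambda>x. indicator Q x * exp c)"
      proof (rule integrable_const_bound[where B="exp c"])
        have "Q \<in> sets (lebesgue_on unit_cube)"
          using Qs Q cube_lmeas by (subst sets_restrict_space_iff) (auto simp: Q_def)
        hence "indicator Q \<in> borel_measurable (lebesgue_on unit_cube)"
          by (rule borel_measurable_indicator)
        thus "(\<lambda>x. indicator Q x * exp c) \<in> borel_measurable (lebesgue_on unit_cube)"
          by measurable
      qed (auto simp: indicator_def)
      fix x :: "real^'n" assume "x \<in> space (lebesgue_on unit_cube)"
      show "indicator Q x * exp c \<le> exp (f x / \<epsilon>)"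
        using fQ[of x] by (auto simp: indicator_def)
    qed
    finally show ?thesis .
  qed
  have "0 < exp c * s ^ CARD('n)" using s(1) by simp
  hence Zpos: "0 < Z" using Zlow by linarith
  have lnup: "ln Z \<le> M / \<epsilon>" using Zup Zpos by (metis ln_exp ln_le_cancel_iff exp_gt_zero)
  have lnlow: "c + CARD('n) * ln s \<le> ln Z"
  proof -
    have "ln (exp c * s ^ CARD('n)) \<le> ln Z" using Zlow s(1) Zpos by (subst ln_le_cancel_iff) auto
    thus ?thesis using s(1) by (simp add: ln_mult ln_realpow)
  qed
  have L: "Lpart (\<lambda>x. f x / \<epsilon>) = ln Z" unfolding Lpart_def Z_def ..
  have sd: "sqrt d * sqrt d = d" using d0 by simp
  have Kb: "K * (s * sqrt d) = \<epsilon> * d * (b * s)"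
    unfolding b_def using e d0 sd by (simp add: field_simps)
  have pw: "3 * real CARD('n) powr (-1/2) * lipconst f / \<epsilon> = 3 * b"
    unfolding b_def K_def[symmetric] d_def using e
    by (simp add: powr_minus powr_half_sqrt field_simps)
  have "\<bar>M - \<epsilon> * ln Z\<bar> = M - \<epsilon> * ln Z" using lnup e by (simp add: field_simps)
  also have "\<dots> \<le> M - \<epsilon> * (c + d * ln s)" using lnlow e unfolding d_def by simp
  also have "\<dots> = \<epsilon> * d * (- ln s + b * s)" using e Kb by (simp add: c_def field_simps)
  also have "\<dots> \<le> \<epsilon> * d * ln (1 + 3 * b)" using s(3) e d0 by (intro mult_left_mono) auto
  finally show ?thesis unfolding supM L pw d_def .
qed


lemma integral_const_cube: "integral\<^sup>L (lebesgue_on (unit_cube :: (real^'n) set)) (\<lambda>x. a) = (a::real)"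
  by (simp add: cube_meas1 space_cube)


lemma part2:
  fixes c d :: real assumes "0 \<le> c"
  shows "((\<lambda>\<epsilon>. \<epsilon> * d * ln (1 + c / \<epsilon>)) \<longlongrightarrow> 0) (at_right 0)"
proof (cases "c = 0")
  case True
  then show ?thesis by simp
next
  case False
  hence "c > 0" using assms by simp
  thus ?thesis by real_asymp
qed




lemma part3:
  fixes g :: "real ^ 'n \<Rightarrow> real" and \<epsilon> \<delta> :: real
  assumes gm: "g \<in> borel_measurable (lebesgue_on unit_cube)" and gb: "bounded (g ` unit_cube)"
    and e: "\<epsilon> > 0" and d: "0 < \<delta>" "\<delta> \<le> 1"
  shows "measure (Pdist (\<lambda>x. g x / \<epsilon>))
           {x \<in> unit_cube. g x < \<epsilon> * Lpart (\<lambda>x. g x / \<epsilon>) - \<epsilon> * ln (1 / \<delta>)} \<le> \<delta>"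
proof -
  interpret finite_measure "lebesgue_on (unit_cube :: (real^'n) set)"
    using finite_measure_lebesgue_on[OF cube_lmeas] .
  obtain B where B: "\<And>x. x \<in> unit_cube \<Longrightarrow> \<bar>g x\<bar> \<le> B"
    using gb unfolding bounded_iff by (auto simp: real_norm_def)
  have hm: "(\<lambda>x. g x / \<epsilon>) \<in> borel_measurable (lebesgue_on unit_cube)" using gm by measurable
  have int: "integrable (lebesgue_on unit_cube) (\<lambda>x. exp (g x / \<epsilon>))"
  proof (rule exp_integrable[OF hm, where B="B/\<epsilon>"])
    fix x :: "real^'n" assume "x \<in> unit_cube"
    hence "g x \<le> B" using B[of x] by auto
    thus "g x / \<epsilon> \<le> B / \<epsilon>" using e by (intro divide_right_mono) auto
  qed
  define Z where "Z = Zpart (\<lambda>x. g x / \<epsilon>)"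
  have Zeq: "Z = integral\<^sup>L (lebesgue_on unit_cube) (\<lambda>x. exp (g x / \<epsilon>))"
    unfolding Z_def by (rule Zpart_eq)
  have "exp (-B/\<epsilon>) \<le> Z"
  proof -
    have "exp (-B/\<epsilon>) = integral\<^sup>L (lebesgue_on (unit_cube :: (real^'n) set)) (\<lambda>x. exp (-B/\<epsilon>))"
      by (rule integral_const_cube[symmetric])
    also have "\<dots> \<le> Z" unfolding Zeq
    proof (rule integral_mono[OF _ int])
      show "integrable (lebesgue_on (unit_cube :: (real^'n) set)) (\<lambda>x. exp (-B / \<epsilon>))" by simp
      fix x :: "real^'n" assume "x \<in> space (lebesgue_on unit_cube)"
      then show "exp (-B / \<epsilon>) \<le> exp (g x / \<epsilon>)"
      proof -
        have "-B \<le> g x" using B[of x] \<open>x \<in> space _\<close> space_cube by auto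
        hence "-B / \<epsilon> \<le> g x / \<epsilon>" using e by (intro divide_right_mono) auto
        thus ?thesis by simp
      qed
    qed
    finally show ?thesis .
  qed
  hence Zpos: "0 < Z" by (meson exp_gt_zero order_less_le_trans)
  have L: "Lpart (\<lambda>x. g x / \<epsilon>) = ln Z" unfolding Lpart_def Z_def ..
  define A where "A = {x \<in> unit_cube. g x < \<epsilon> * ln Z - \<epsilon> * ln (1 / \<delta>)}"
  have As: "A \<in> sets (lebesgue_on unit_cube)"
  proof -
    have "{x \<in> space (lebesgue_on unit_cube). g x < \<epsilon> * ln Z - \<epsilon> * ln (1 / \<delta>)} \<in> sets (lebesgue_on unit_cube)"
      using gm by measurable
    thus ?thesis unfolding A_def space_cube .
  qed
  have bnd: "exp (g x / \<epsilon>) / Z \<le> \<delta>" if "x \<in> A" for x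
  proof -
    have "g x / \<epsilon> < ln Z - ln (1/\<delta>)" using that e by (simp add: A_def field_simps)
    also have "\<dots> = ln (Z * \<delta>)" using Zpos d by (simp add: ln_mult ln_div)
    finally have "exp (g x / \<epsilon>) < Z * \<delta>" using Zpos d by (metis exp_less_cancel_iff exp_ln mult_pos_pos)
    thus ?thesis using Zpos by (simp add: divide_le_eq mult.commute)
  qed
  have dm: "(\<lambda>x. ennreal (exp (g x / \<epsilon>) / Z)) \<in> borel_measurable (lebesgue_on unit_cube)"
    using hm by measurable
  have "emeasure (Pdist (\<lambda>x. g x / \<epsilon>)) A
      = (\<integral>\<^sup>+ x. ennreal (exp (g x / \<epsilon>) / Z) * indicator A x \<partial>lebesgue_on unit_cube)"
    unfolding Pdist_def Z_def[symmetric] by (rule emeasure_density[OF dm As])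
  also have "\<dots> \<le> (\<integral>\<^sup>+ x. ennreal \<delta> * indicator A x \<partial>lebesgue_on unit_cube)"
  proof (rule nn_integral_mono)
    fix x
    show "ennreal (exp (g x / \<epsilon>) / Z) * indicator A x \<le> ennreal \<delta> * indicator A x"
    proof (cases "x \<in> A")
      case True
      then show ?thesis using bnd[OF True] by (simp add: ennreal_leI)
    qed simp
  qed
  also have "\<dots> = ennreal \<delta> * emeasure (lebesgue_on unit_cube) A"
    using As by (simp add: nn_integral_cmult_indicator)
  also have "\<dots> \<le> ennreal \<delta> * 1"
  proof (rule mult_left_mono)
    have "emeasure (lebesgue_on unit_cube) A \<le> emeasure (lebesgue_on unit_cube) (unit_cube :: (real^'n) set)"
      by (rule emeasure_mono) (auto simp: A_def)
    also have "\<dots> = ennreal (measure (lebesgue_on unit_cube) (unit_cube :: (real^'n) set))"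
      by (rule emeasure_eq_measure)
    also have "\<dots> = 1" by (simp add: cube_meas1)
    finally show "emeasure (lebesgue_on unit_cube) A \<le> 1" .
  qed simp
  finally have "emeasure (Pdist (\<lambda>x. g x / \<epsilon>)) A \<le> ennreal \<delta>" by simp
  hence "measure (Pdist (\<lambda>x. g x / \<epsilon>)) A \<le> \<delta>"
    unfolding measure_def using d by (intro enn2real_leI) auto
  thus ?thesis unfolding L A_def .
qed

theorem lemma1:
  fixes f :: "real ^ 'n \<Rightarrow> real"
  assumes "\<exists>C. C-lipschitz_on unit_cube f"
  shows "(\<forall>\<epsilon>>0. \<bar>Sup (f ` unit_cube) - \<epsilon> * Lpart (\<lambda>x. f x / \<epsilon>)\<bar>
            \<le> \<epsilon> * real CARD('n) *
               ln (1 + 3 * real CARD('n) powr (-1/2) * lipconst f / \<epsilon>))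
       \<and> ((\<lambda>\<epsilon>. \<epsilon> * real CARD('n) *
               ln (1 + 3 * real CARD('n) powr (-1/2) * lipconst f / \<epsilon>)) \<longlongrightarrow> 0) (at_right 0)
       \<and> (\<forall>g :: real ^ 'n \<Rightarrow> real. g \<in> borel_measurable (lebesgue_on unit_cube) \<and> bounded (g ` unit_cube)
            \<longrightarrow> (\<forall>\<epsilon>>0. \<forall>\<delta>. 0 < \<delta> \<and> \<delta> \<le> 1 \<longrightarrow>
                  measure (Pdist (\<lambda>x. g x / \<epsilon>))
                    {x \<in> unit_cube. g x < \<epsilon> * Lpart (\<lambda>x. g x / \<epsilon>) - \<epsilon> * ln (1 / \<delta>)} \<le> \<delta>))"
proof (intro conjI allI impI)
  show "\<bar>Sup (f ` unit_cube) - \<epsilon> * Lpart (\<lambda>x. f x / \<epsilon>)\<bar>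
            \<le> \<epsilon> * real CARD('n) *
               ln (1 + 3 * real CARD('n) powr (-1/2) * lipconst f / \<epsilon>)" if "\<epsilon> > 0" for \<epsilon> :: real
    by (rule part1[OF assms that])
  have "0 \<le> lipconst f" using lipconst_lip[OF assms] by (rule lipschitz_on_nonneg)
  hence "0 \<le> 3 * real CARD('n) powr (-1/2) * lipconst f" by simp
  from part2[OF this, of "real CARD('n)"]
  show "((\<lambda>\<epsilon>. \<epsilon> * real CARD('n) *
               ln (1 + 3 * real CARD('n) powr (-1/2) * lipconst f / \<epsilon>)) \<longlongrightarrow> 0) (at_right 0)"
    by simp
  fix g :: "real ^ 'n \<Rightarrow> real" and \<epsilon> \<delta> :: real
  assume "g \<in> borel_measurable (lebesgue_on unit_cube) \<and> bounded (g ` unit_cube)" "\<epsilon> > 0"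
    "0 < \<delta> \<and> \<delta> \<le> 1"
  thus "measure (Pdist (\<lambda>x. g x / \<epsilon>))
                    {x \<in> unit_cube. g x < \<epsilon> * Lpart (\<lambda>x. g x / \<epsilon>) - \<epsilon> * ln (1 / \<delta>)} \<le> \<delta>"
    using part3[of g \<epsilon> \<delta>] by blast
qed


end
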